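(* Let $n\ge 0$, let $a_{n,0},\dots,a_{n,n}\in\mathbb C$, and let $P_n$ be the polynomial associated to $\{a_{n,k}\}_{k=0}^n$, i.e. $\sum_{k=0}^n a_{n,k}q^kp^nq^{n-k}=P_n(z)$ in $\mathcal A$. Then for $0\le k\le n$, $$a_{n,k}=\frac{1}{\imath^{n}n!}\sum_{j=0}^{n-k}(-1)^{n-k-j}\binom{n+1}{n-k-j}P_n\!\left(\imath\left(j+\tfrac12\right)\right).$$ Equivalently, writing $P_n(z)=\sum_{r=0}^n b_{n,r}z^r$, $$a_{n,k}=\frac{1}{\imath^{n}n!}\sum_{j=0}^{n-k}(-1)^{n-k-j}\binom{n+1}{n-k-j}\sum_{r=0}^{n}b_{n,r}\,\imath^{r}\left(j+\tfrac12\right)^{r}.$$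
   Context: $\imath=\sqrt{-1}$. $\mathcal{A}$ denotes the quotient of the free associative $\mathbb{C}$-algebra on two noncommuting generators $p,q$ by the two-sided ideal generated by $qp-pq-\imath$, and $z=\tfrac12(qp+pq)\in\mathcal A$. For $n\ge0$ and complex numbers $a_{n,0},\dots,a_{n,n}$, there is a unique polynomial $P_n\in\mathbb{C}[X]$ of degree at most $n$ with $\sum_{k=0}^n a_{n,k}q^kp^nq^{n-k}=P_n(z)$ in $\mathcal A$; it is called the polynomial associated to $\{a_{n,k}\}$. *)

theory Defs
  imports Complex_Main "HOL-Computational_Algebra.Polynomial"
begin

text \<open>The free associative C-algebra on two noncommuting generators p, q:
  elements are coefficient functions on words (lists of letters); only
  finitely supported ones arise below.\<close>

datatype letter = Lp | Lq

type_synonym falg = "letter list \<Rightarrow> complex"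

definition fa_mult :: "falg \<Rightarrow> falg \<Rightarrow> falg" where
  "fa_mult f g = (\<lambda>w. \<Sum>i\<le>length w. f (take i w) * g (drop i w))"

definition fa_add :: "falg \<Rightarrow> falg \<Rightarrow> falg" where
  "fa_add f g = (\<lambda>w. f w + g w)"

definition fa_smult :: "complex \<Rightarrow> falg \<Rightarrow> falg" where
  "fa_smult c f = (\<lambda>w. c * f w)"

definition fa_zero :: falg where
  "fa_zero = (\<lambda>w. 0)"

definition fa_word :: "letter list \<Rightarrow> falg" where
  "fa_word u = (\<lambda>w. if w = u then 1 else 0)"

definition fa_one :: falg where "fa_one = fa_word []"
definition fa_p :: falg where "fa_p = fa_word [Lp]"
definition fa_q :: falg where "fa_q = fa_word [Lq]"

definition fa_sum :: "('i \<Rightarrow> falg) \<Rightarrow> 'i set \<Rightarrow> falg" where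
  "fa_sum F I = (\<lambda>w. \<Sum>i\<in>I. F i w)"

primrec fa_pow :: "falg \<Rightarrow> nat \<Rightarrow> falg" where
  "fa_pow x 0 = fa_one"
| "fa_pow x (Suc n) = fa_mult (fa_pow x n) x"

definition weyl_rel :: falg where
  "weyl_rel = (\<lambda>w. fa_word [Lq, Lp] w - fa_word [Lp, Lq] w - \<i> * fa_one w)"

inductive_set weyl_ideal :: "falg set" where
  rel: "weyl_rel \<in> weyl_ideal"
| zero: "fa_zero \<in> weyl_ideal"
| add: "x \<in> weyl_ideal \<Longrightarrow> y \<in> weyl_ideal \<Longrightarrow> fa_add x y \<in> weyl_ideal"
| smult: "x \<in> weyl_ideal \<Longrightarrow> fa_smult c x \<in> weyl_ideal"
| lmult: "x \<in> weyl_ideal \<Longrightarrow> fa_mult (fa_word [l]) x \<in> weyl_ideal"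
| rmult: "x \<in> weyl_ideal \<Longrightarrow> fa_mult x (fa_word [l]) \<in> weyl_ideal"

definition weyl_eq :: "falg \<Rightarrow> falg \<Rightarrow> bool" where
  "weyl_eq x y \<longleftrightarrow> (\<lambda>w. x w - y w) \<in> weyl_ideal"

definition weyl_z :: falg where
  "weyl_z = fa_smult (1/2) (fa_add (fa_mult fa_q fa_p) (fa_mult fa_p fa_q))"

definition fa_poly :: "complex poly \<Rightarrow> falg \<Rightarrow> falg" where
  "fa_poly P x = fa_sum (\<lambda>r. fa_smult (coeff P r) (fa_pow x r)) {..degree P}"

definition weyl_lhs :: "nat \<Rightarrow> (nat \<Rightarrow> complex) \<Rightarrow> falg" where
  "weyl_lhs n a = fa_sum (\<lambda>k. fa_smult (a k)
      (fa_mult (fa_mult (fa_pow fa_q k) (fa_pow fa_p n)) (fa_pow fa_q (n - k)))) {..n}"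

definition associated_poly :: "nat \<Rightarrow> (nat \<Rightarrow> complex) \<Rightarrow> complex poly \<Rightarrow> bool" where
  "associated_poly n a P \<longleftrightarrow> degree P \<le> n \<and> weyl_eq (weyl_lhs n a) (fa_poly P weyl_z)"

end

theory Submission
  imports Defs "HOL-Computational_Algebra.Formal_Power_Series"
begin

lemma key_id:
  fixes n e :: nat
  shows "(\<Sum>t=0..e. (-1)^t * of_nat (Suc n choose t) * of_nat ((n + e - t) choose n) :: complex)
         = (if e = 0 then 1 else 0)"
proof -
  have V: "(\<Sum>t=0..e. (of_nat (Suc n) gchoose t) * ((- of_nat (Suc n)) gchoose (e - t)) :: complex)
     = (0 gchoose e)"
    using gbinomial_Vandermonde[of "of_nat (Suc n) :: complex" "- of_nat (Suc n)" e] by simp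
  have T: "(of_nat (Suc n) gchoose t) * ((- of_nat (Suc n)) gchoose (e - t)) =
       (-1)^e * ((-1)^t * of_nat (Suc n choose t) * of_nat ((n + e - t) choose n) :: complex)"
    if "t \<in> {0..e}" for t
  proof -
    from that have te: "t \<le> e" by simp
    have 1: "((- of_nat (Suc n)) gchoose (e - t) :: complex) = (-1)^(e-t) * of_nat ((n + (e - t)) choose (e-t))"
      using gbinomial_minus[of "of_nat (Suc n) :: complex" "e - t"]
      by (simp add: binomial_gbinomial add.commute)
    have 2: "((n + (e - t)) choose (e-t)) = ((n + e - t) choose n)"
      using te by (metis add_diff_assoc binomial_symmetric le_add2 add_diff_cancel_right')
    have 3: "(-1::complex)^(e-t) = (-1)^e * (-1)^t"
    proof -
      have "(-1::complex)^e = (-1)^(e-t) * (-1)^t" using te by (metis le_add_diff_inverse2 power_add)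
      then have "(-1::complex)^e * (-1)^t = (-1)^(e-t) * ((-1)^t * (-1)^t)" by (simp add: mult.assoc)
      moreover have "(-1::complex)^t * (-1)^t = 1" by (simp flip: power_mult_distrib)
      ultimately show ?thesis by simp
    qed
    show ?thesis using 1 2 3 by (simp add: binomial_gbinomial algebra_simps)
  qed
  have Z: "(0 gchoose e :: complex) = (if e = 0 then 1 else 0)"
    by (cases e) (auto simp: gbinomial_Suc)
  have "(-1)^e * (\<Sum>t=0..e. (-1)^t * of_nat (Suc n choose t) * of_nat ((n + e - t) choose n) :: complex)
     = (if e = 0 then 1 else 0)"
    using V T Z by (simp add: sum_distrib_left)
  then show ?thesis by (cases "e = 0") auto
qed

lemma inner_id:
  fixes n k l :: nat
  assumes "k \<le> n" "l \<le> n"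
  shows "(\<Sum>j=0..n-k. (-1)^(n-k-j) * of_nat ((n+1) choose (n-k-j)) * of_nat ((j+l) choose n) :: complex)
         = (if l = k then 1 else 0)"
proof -
  have R: "(\<Sum>j=0..n-k. (-1)^(n-k-j) * of_nat ((n+1) choose (n-k-j)) * of_nat ((j+l) choose n) :: complex)
    = (\<Sum>t=0..n-k. (-1)^t * of_nat (Suc n choose t) * of_nat ((n - k - t + l) choose n))"
    apply (subst sum.atLeastAtMost_rev)
    apply (rule sum.cong[OF refl])
    subgoal for x
      using assms by (subgoal_tac "n - k + 0 - x = n - k - x" "n - k - (n - k + 0 - x) = x") auto
    done
  show ?thesis
  proof (cases "l < k")
    case True
    have "(\<Sum>t=0..n-k. (-1)^t * of_nat (Suc n choose t) * of_nat ((n - k - t + l) choose n) :: complex) = 0"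
      by (rule sum.neutral) (use True assms in \<open>auto simp: binomial_eq_0\<close>)
    then show ?thesis using R True by simp
  next
    case False
    define e where "e = l - k"
    have le: "e \<le> n - k" using False assms unfolding e_def by simp
    have "(\<Sum>t=0..n-k. (-1)^t * of_nat (Suc n choose t) * of_nat ((n - k - t + l) choose n) :: complex)
       = (\<Sum>t=0..n-k. (-1)^t * of_nat (Suc n choose t) * of_nat ((n + e - t) choose n))"
      by (rule sum.cong) (use False assms in \<open>auto simp: e_def\<close>)
    also have "\<dots> = (\<Sum>t=0..e. (-1)^t * of_nat (Suc n choose t) * of_nat ((n + e - t) choose n))"
      by (rule sum.mono_neutral_right) (use le in \<open>auto simp: binomial_eq_0\<close>)
    also have "\<dots> = (if e = 0 then 1 else 0)" by (rule key_id)
    finally show ?thesis using R False unfolding e_def by auto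
  qed
qed

fun rho_l :: "letter \<Rightarrow> complex poly \<Rightarrow> complex poly" where
  "rho_l Lp P = monom 1 1 * P"
| "rho_l Lq P = smult \<i> (pderiv P)"

fun rho :: "letter list \<Rightarrow> complex poly \<Rightarrow> complex poly" where
  "rho [] P = P"
| "rho (l # w) P = rho_l l (rho w P)"

definition supp :: "falg \<Rightarrow> letter list set" where
  "supp f = {w. f w \<noteq> 0}"

definition Phi :: "falg \<Rightarrow> complex poly \<Rightarrow> complex poly" where
  "Phi f P = (\<Sum>w\<in>supp f. smult (f w) (rho w P))"

lemma smult_sum_right: "smult c (\<Sum>i\<in>I. F i) = (\<Sum>i\<in>I. smult c (F i))"
  by (rule poly_eqI) (simp add: coeff_sum sum_distrib_left)

lemma rho_l_add: "rho_l l (P + Q) = rho_l l P + rho_l l Q"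
  by (cases l) (auto simp: algebra_simps pderiv_add smult_add_right)

lemma rho_l_smult: "rho_l l (smult c P) = smult c (rho_l l P)"
  by (cases l) (auto simp: pderiv_smult mult.commute)

lemma rho_add: "rho w (P + Q) = rho w P + rho w Q"
  by (induction w) (auto simp: rho_l_add)

lemma rho_smult: "rho w (smult c P) = smult c (rho w P)"
  by (induction w) (auto simp: rho_l_smult)

lemma rho_zero: "rho w 0 = 0"
  using rho_smult[of w 0 0] by simp

lemma rho_sum: "rho w (\<Sum>i\<in>I. F i) = (\<Sum>i\<in>I. rho w (F i))"
proof (cases "finite I")
  case True
  then show ?thesis by (induction I rule: finite_induct) (auto simp: rho_zero rho_add)
qed (simp add: rho_zero)

lemma rho_append: "rho (u @ v) P = rho u (rho v P)"
  by (induction u) auto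

lemma Phi_eq:
  assumes "finite S" "supp f \<subseteq> S"
  shows "Phi f P = (\<Sum>w\<in>S. smult (f w) (rho w P))"
  unfolding Phi_def
  by (rule sum.mono_neutral_left) (use assms in \<open>auto simp: supp_def\<close>)

abbreviation fin :: "falg \<Rightarrow> bool" where "fin f \<equiv> finite (supp f)"

lemma fin_add: "fin f \<Longrightarrow> fin g \<Longrightarrow> fin (fa_add f g)"
  by (rule finite_subset[of _ "supp f \<union> supp g"]) (auto simp: supp_def fa_add_def)

lemma Phi_add:
  assumes "fin f" "fin g"
  shows "Phi (fa_add f g) P = Phi f P + Phi g P"
proof -
  let ?S = "supp f \<union> supp g"
  have "Phi (fa_add f g) P = (\<Sum>w\<in>?S. smult (fa_add f g w) (rho w P))"
    by (rule Phi_eq) (use assms in \<open>auto simp: supp_def fa_add_def\<close>)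
  also have "\<dots> = (\<Sum>w\<in>?S. smult (f w) (rho w P)) + (\<Sum>w\<in>?S. smult (g w) (rho w P))"
    by (simp add: fa_add_def smult_add_left sum.distrib)
  also have "\<dots> = Phi f P + Phi g P"
    using Phi_eq[of ?S f P] Phi_eq[of ?S g P] assms by auto
  finally show ?thesis .
qed

lemma fin_smult: "fin f \<Longrightarrow> fin (fa_smult c f)"
  by (rule finite_subset[of _ "supp f"]) (auto simp: supp_def fa_smult_def)

lemma Phi_smult:
  assumes "fin f"
  shows "Phi (fa_smult c f) P = smult c (Phi f P)"
proof -
  have "Phi (fa_smult c f) P = (\<Sum>w\<in>supp f. smult (fa_smult c f w) (rho w P))"
    by (rule Phi_eq) (use assms in \<open>auto simp: supp_def fa_smult_def\<close>)
  then show ?thesis by (simp add: Phi_def smult_sum_right fa_smult_def)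
qed

lemma Phi_smult_P: "Phi f (smult c P) = smult c (Phi f P)"
  by (simp add: Phi_def smult_sum_right rho_smult mult.commute)

lemma fin_zero: "fin fa_zero"
  by (simp add: supp_def fa_zero_def)

lemma Phi_zero: "Phi fa_zero P = 0"
  by (simp add: Phi_def supp_def fa_zero_def)

lemma supp_word: "supp (fa_word u) = {u}"
  by (auto simp: supp_def fa_word_def)

lemma fin_word: "fin (fa_word u)"
  by (simp add: supp_word)

lemma Phi_word: "Phi (fa_word u) P = rho u P"
  unfolding Phi_def supp_word by (simp add: fa_word_def)

lemma mult_word_left:
  "fa_mult (fa_word u) g = (\<lambda>w. if take (length u) w = u then g (drop (length u) w) else 0)"
proof
  fix w
  have "fa_mult (fa_word u) g w =
     (\<Sum>i\<le>length w. if i = length u then (if take (length u) w = u then g (drop (length u) w) else 0) else 0)"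
    unfolding fa_mult_def fa_word_def
    by (rule sum.cong) auto
  also have "\<dots> = (if take (length u) w = u then g (drop (length u) w) else 0)"
    by (auto simp: min_def)
  finally show "fa_mult (fa_word u) g w = (if take (length u) w = u then g (drop (length u) w) else 0)" .
qed

lemma mult_word_right:
  "fa_mult f (fa_word u) = (\<lambda>w. if length u \<le> length w \<and> drop (length w - length u) w = u
      then f (take (length w - length u) w) else 0)"
proof
  fix w
  have "fa_mult f (fa_word u) w =
     (\<Sum>i\<le>length w. if i = length w - length u then (if length u \<le> length w \<and> drop (length w - length u) w = u
      then f (take (length w - length u) w) else 0) else 0)"
    unfolding fa_mult_def fa_word_def
    by (rule sum.cong) auto
  also have "\<dots> = (if length u \<le> length w \<and> drop (length w - length u) w = u
      then f (take (length w - length u) w) else 0)"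
    by auto
  finally show "fa_mult f (fa_word u) w = (if length u \<le> length w \<and> drop (length w - length u) w = u
      then f (take (length w - length u) w) else 0)" .
qed

lemma word_mult: "fa_mult (fa_word u) (fa_word v) = fa_word (u @ v)"
  unfolding mult_word_left
  apply (rule ext)
  apply (auto simp: fa_word_def)
  by (metis append_take_drop_id)

lemma supp_mult_word_left: "supp (fa_mult (fa_word u) g) = (\<lambda>v. u @ v) ` supp g"
proof (rule set_eqI, rule iffI)
  fix w assume "w \<in> supp (fa_mult (fa_word u) g)"
  then have h: "take (length u) w = u" "g (drop (length u) w) \<noteq> 0"
    by (simp_all add: supp_def mult_word_left split: if_splits)
  have "w = u @ drop (length u) w" using h(1) by (metis append_take_drop_id)
  then show "w \<in> (\<lambda>v. u @ v) ` supp g" using h(2) unfolding supp_def by blast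
next
  fix w assume "w \<in> (\<lambda>v. u @ v) ` supp g"
  then obtain v where "w = u @ v" "g v \<noteq> 0" by (auto simp: supp_def)
  then show "w \<in> supp (fa_mult (fa_word u) g)" by (simp add: supp_def mult_word_left)
qed

lemma supp_mult_word_right: "supp (fa_mult f (fa_word u)) = (\<lambda>v. v @ u) ` supp f"
proof (rule set_eqI, rule iffI)
  fix w assume "w \<in> supp (fa_mult f (fa_word u))"
  then have h: "drop (length w - length u) w = u" "f (take (length w - length u) w) \<noteq> 0"
    by (simp_all add: supp_def mult_word_right split: if_splits)
  have "w = take (length w - length u) w @ u" using h(1) by (metis append_take_drop_id)
  then show "w \<in> (\<lambda>v. v @ u) ` supp f" using h(2) unfolding supp_def by blast
next
  fix w assume "w \<in> (\<lambda>v. v @ u) ` supp f"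
  then obtain v where "w = v @ u" "f v \<noteq> 0" by (auto simp: supp_def)
  then show "w \<in> supp (fa_mult f (fa_word u))" by (simp add: supp_def mult_word_right)
qed

lemma fin_mult_word_left: "fin g \<Longrightarrow> fin (fa_mult (fa_word u) g)"
  by (simp add: supp_mult_word_left)

lemma fin_mult_word_right: "fin f \<Longrightarrow> fin (fa_mult f (fa_word u))"
  by (simp add: supp_mult_word_right)

lemma Phi_mult_word_left: "Phi (fa_mult (fa_word u) g) P = rho u (Phi g P)"
proof -
  have "Phi (fa_mult (fa_word u) g) P = (\<Sum>v\<in>supp g. smult (fa_mult (fa_word u) g (u @ v)) (rho (u @ v) P))"
    unfolding Phi_def supp_mult_word_left
    by (subst sum.reindex) (auto simp: inj_on_def)
  also have "\<dots> = (\<Sum>v\<in>supp g. smult (g v) (rho u (rho v P)))"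
    by (simp add: mult_word_left rho_append)
  also have "\<dots> = rho u (Phi g P)"
    by (simp add: Phi_def rho_sum rho_smult)
  finally show ?thesis .
qed

lemma Phi_mult_word_right: "Phi (fa_mult f (fa_word u)) P = Phi f (rho u P)"
proof -
  have "Phi (fa_mult f (fa_word u)) P = (\<Sum>v\<in>supp f. smult (fa_mult f (fa_word u) (v @ u)) (rho (v @ u) P))"
    unfolding Phi_def supp_mult_word_right
    by (subst sum.reindex) (auto simp: inj_on_def)
  also have "\<dots> = Phi f (rho u P)"
    by (simp add: mult_word_right rho_append Phi_def)
  finally show ?thesis .
qed

lemma rel_Phi: "rho [Lq, Lp] P - rho [Lp, Lq] P - smult \<i> P = 0"
  by (simp add: pderiv_mult pderiv_monom algebra_simps smult_add_right monom_0 one_pCons)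

lemma ideal_Phi: "x \<in> weyl_ideal \<Longrightarrow> fin x \<and> (\<forall>P. Phi x P = 0)"
proof (induction rule: weyl_ideal.induct)
  case rel
  let ?S = "{[Lq, Lp], [Lp, Lq], []}"
  have s: "supp weyl_rel \<subseteq> ?S"
    by (auto simp: supp_def weyl_rel_def fa_word_def fa_one_def)
  have "fin weyl_rel" by (rule finite_subset[OF s]) simp
  moreover have "Phi weyl_rel P = 0" for P
  proof -
    have "Phi weyl_rel P = (\<Sum>w\<in>?S. smult (weyl_rel w) (rho w P))"
      by (rule Phi_eq[OF _ s]) simp
    also have "\<dots> = rho [Lq, Lp] P - rho [Lp, Lq] P - smult \<i> P"
      by (simp add: weyl_rel_def fa_word_def fa_one_def)
    also have "\<dots> = 0" by (rule rel_Phi)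
    finally show ?thesis .
  qed
  ultimately show ?case by blast
next
  case zero
  then show ?case by (simp add: fin_zero Phi_zero)
next
  case (add x y)
  then show ?case by (simp add: fin_add Phi_add)
next
  case (smult x c)
  then show ?case by (simp add: fin_smult Phi_smult)
next
  case (lmult x l)
  then show ?case by (simp add: fin_mult_word_left Phi_mult_word_left rho_zero)
next
  case (rmult x l)
  then show ?case by (simp add: fin_mult_word_right Phi_mult_word_right)
qed


lemma pow_word: "fa_pow (fa_word [l]) n = fa_word (replicate n l)"
  by (induction n) (auto simp: fa_one_def word_mult replicate_append_same)

lemma fa_sum_empty: "fa_sum F {} = fa_zero"
  by (simp add: fa_sum_def fa_zero_def)

lemma fa_sum_insert: "finite I \<Longrightarrow> i \<notin> I \<Longrightarrow> fa_sum F (insert i I) = fa_add (F i) (fa_sum F I)"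
  by (simp add: fa_sum_def fa_add_def)

lemma Phi_fa_sum:
  assumes "finite I" "\<And>i. i \<in> I \<Longrightarrow> fin (F i)"
  shows "fin (fa_sum F I) \<and> Phi (fa_sum F I) P = (\<Sum>i\<in>I. Phi (F i) P)"
  using assms
proof (induction I rule: finite_induct)
  case empty
  then show ?case by (simp add: fa_sum_empty fin_zero Phi_zero)
next
  case (insert i I)
  then show ?case by (simp add: fa_sum_insert fin_add Phi_add)
qed

lemma z_eq: "weyl_z = fa_smult (1/2) (fa_add (fa_word [Lq, Lp]) (fa_word [Lp, Lq]))"
  by (simp add: weyl_z_def fa_q_def fa_p_def word_mult)

lemma mult_add_right: "fa_mult f (fa_add g h) = fa_add (fa_mult f g) (fa_mult f h)"
  by (rule ext) (simp add: fa_mult_def fa_add_def distrib_left sum.distrib)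

lemma mult_smult_right: "fa_mult f (fa_smult c g) = fa_smult c (fa_mult f g)"
  by (rule ext) (simp add: fa_mult_def fa_smult_def sum_distrib_left algebra_simps)

lemma Phi_add_P: "Phi f (P + Q) = Phi f P + Phi f Q"
  by (simp add: Phi_def rho_add smult_add_right sum.distrib)

lemma Phi_monom: "Phi f (monom c m) = smult c (Phi f (monom 1 m))"
  by (metis Phi_smult_P mult.right_neutral smult_monom)

lemma fin_mult_z: "fin f \<Longrightarrow> fin (fa_mult f weyl_z)"
  by (simp add: z_eq mult_smult_right mult_add_right fin_smult fin_add fin_mult_word_right)

lemma Phi_mult_z:
  assumes "fin f"
  shows "Phi (fa_mult f weyl_z) P = smult (1/2) (Phi f (rho [Lq, Lp] P) + Phi f (rho [Lp, Lq] P))"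
  using assms
  by (simp add: z_eq mult_smult_right mult_add_right fin_smult fin_add fin_mult_word_right
      Phi_smult Phi_add Phi_mult_word_right)

lemma rho_qp_monom: "rho [Lq, Lp] (monom c m) = monom (\<i> * (of_nat m + 1) * c) m"
  by (simp add: mult_monom pderiv_monom smult_monom algebra_simps)

lemma rho_pq_monom: "rho [Lp, Lq] (monom c m) = monom (\<i> * of_nat m * c) m"
  by (cases m) (simp_all add: mult_monom pderiv_monom smult_monom algebra_simps)

definition lam :: "nat \<Rightarrow> complex" where "lam m = \<i> * (of_nat m + 1/2)"

lemma Phi_pow_z: "fin (fa_pow weyl_z r) \<and> Phi (fa_pow weyl_z r) (monom 1 m) = monom (lam m ^ r) m"
proof (induction r)
  case 0
  then show ?case by (simp add: fa_one_def fin_word Phi_word)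
next
  case (Suc r)
  then have f: "fin (fa_pow weyl_z r)" by simp
  have "Phi (fa_pow weyl_z (Suc r)) (monom 1 m)
     = smult (1/2) (Phi (fa_pow weyl_z r) (monom (\<i> * (of_nat m + 1)) m) + Phi (fa_pow weyl_z r) (monom (\<i> * of_nat m) m))"
    by (simp only: Phi_mult_z[OF f] rho_qp_monom rho_pq_monom mult_1_right fa_pow.simps)
  also have "\<dots> = monom ((1/2) * (\<i> * (of_nat m + 1) * lam m ^ r + \<i> * of_nat m * lam m ^ r)) m"
    using Suc by (simp add: Phi_monom[of _ "\<i> * (of_nat m + 1)"] Phi_monom[of _ "\<i> * of_nat m"]
        smult_monom add_monom)
  also have "(1/2) * (\<i> * (of_nat m + 1) * lam m ^ r + \<i> * of_nat m * lam m ^ r) = lam m ^ Suc r"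
    by (simp add: lam_def algebra_simps)
  finally show ?case using f by (simp add: fin_mult_z)
qed

definition D :: "nat \<Rightarrow> nat \<Rightarrow> nat" where "D N j = (\<Prod>t<j. N - t)"

lemma D_0: "D N 0 = 1" by (simp add: D_def)
lemma D_Suc: "D N (Suc j) = D N j * (N - j)" by (simp add: D_def)

lemma D_split: "D N (a + b) = D N a * D (N - a) b"
  by (induction b) (auto simp: D_def diff_diff_eq)

lemma D_fact: "D N j = fact j * (N choose j)"
proof (induction j)
  case 0
  then show ?case by (simp add: D_def)
next
  case (Suc j)
  have h: "(N - j) * (N choose j) = Suc j * (N choose Suc j)"
    by (metis binomial_absorption binomial_absorb_comp)
  have "D N (Suc j) = fact j * (N choose j) * (N - j)" by (simp only: D_Suc Suc.IH)
  also have "\<dots> = fact j * ((N - j) * (N choose j))" by (simp only: mult_ac)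
  also have "\<dots> = fact j * (Suc j * (N choose Suc j))" by (simp only: h)
  also have "\<dots> = fact (Suc j) * (N choose Suc j)" by (simp only: fact_Suc mult_ac of_nat_id)
  finally show ?case .
qed


lemma rho_q_pow: "rho (replicate j Lq) (monom c m) = monom (c * \<i> ^ j * of_nat (D m j)) (m - j)"
  by (induction j) (simp_all add: D_0 D_Suc pderiv_monom smult_monom of_nat_mult mult_ac)

lemma rho_p_pow: "rho (replicate j Lp) (monom c m) = monom c (m + j)"
  by (induction j) (auto simp: mult_monom)

lemma term_rho:
  "rho (replicate k Lq @ replicate n Lp @ replicate (n - k) Lq) (monom 1 m)
   = monom (\<i> ^ (n - k) * of_nat (D m (n - k)) * \<i> ^ k * of_nat (D (m - (n - k) + n) k)) (m - (n - k) + n - k)"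
  by (simp add: rho_append rho_q_pow rho_p_pow)

lemma term_coeff:
  assumes "k \<le> n"
  shows "coeff (rho (replicate k Lq @ replicate n Lp @ replicate (n - k) Lq) (monom 1 m)) m
     = \<i> ^ n * of_nat (fact n * ((m + k) choose n))"
proof (cases "n - k \<le> m")
  case True
  have e1: "m - (n - k) + n = m + k" "m + k - k = m" using True assms by auto
  have d: "D m (n - k) * D (m + k) k = fact n * ((m + k) choose n)"
    using D_split[of "m + k" k "n - k"] assms by (simp add: mult.commute D_fact)
  have p: "\<i> ^ (n - k) * \<i> ^ k = (\<i> ^ n :: complex)"
    using assms by (simp flip: power_add)
  have "\<i> ^ (n - k) * of_nat (D m (n - k)) * \<i> ^ k * of_nat (D (m + k) k)
      = (\<i> ^ (n - k) * \<i> ^ k) * (of_nat (D m (n - k) * D (m + k) k) :: complex)"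
    by (simp only: of_nat_mult mult_ac)
  also have "\<dots> = \<i> ^ n * of_nat (fact n * ((m + k) choose n))"
    by (simp only: p d)
  finally have F: "\<i> ^ (n - k) * of_nat (D m (n - k)) * \<i> ^ k * of_nat (D (m + k) k)
      = \<i> ^ n * (of_nat (fact n * ((m + k) choose n)) :: complex)" .
  show ?thesis unfolding term_rho e1 coeff_monom using F by simp
next
  case False
  have "D m (n - k) = 0"
    unfolding D_def using False by (auto intro!: bexI[of _ m])
  moreover have "(m + k) choose n = 0" using False assms by (simp add: binomial_eq_0)
  ultimately show ?thesis
    by (simp add: term_rho)
qed

lemma lhs_eq: "weyl_lhs n a = fa_sum (\<lambda>k. fa_smult (a k)
    (fa_word (replicate k Lq @ replicate n Lp @ replicate (n - k) Lq))) {..n}"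
  by (simp add: weyl_lhs_def fa_q_def fa_p_def pow_word word_mult)

lemma lhs_fin_Phi:
  "fin (weyl_lhs n a) \<and> coeff (Phi (weyl_lhs n a) (monom 1 m)) m
     = (\<Sum>l\<le>n. a l * (\<i> ^ n * of_nat (fact n * ((m + l) choose n))))"
proof -
  have h: "fin (weyl_lhs n a) \<and> Phi (weyl_lhs n a) (monom 1 m) =
    (\<Sum>k\<le>n. Phi (fa_smult (a k) (fa_word (replicate k Lq @ replicate n Lp @ replicate (n - k) Lq))) (monom 1 m))"
    unfolding lhs_eq by (rule Phi_fa_sum) (auto simp: fin_smult fin_word)
  then have "coeff (Phi (weyl_lhs n a) (monom 1 m)) m =
     (\<Sum>k\<le>n. a k * coeff (rho (replicate k Lq @ replicate n Lp @ replicate (n - k) Lq) (monom 1 m)) m)"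
    by (simp add: coeff_sum Phi_smult fin_word Phi_word)
  also have "\<dots> = (\<Sum>l\<le>n. a l * (\<i> ^ n * of_nat (fact n * ((m + l) choose n))))"
    by (rule sum.cong) (auto simp: term_coeff)
  finally show ?thesis using h by blast
qed

lemma rhs_fin_Phi:
  "fin (fa_poly P weyl_z) \<and> coeff (Phi (fa_poly P weyl_z) (monom 1 m)) m = poly P (lam m)"
proof -
  have h: "fin (fa_poly P weyl_z) \<and> Phi (fa_poly P weyl_z) (monom 1 m) =
    (\<Sum>r\<le>degree P. Phi (fa_smult (coeff P r) (fa_pow weyl_z r)) (monom 1 m))"
    unfolding fa_poly_def by (rule Phi_fa_sum) (auto simp: fin_smult Phi_pow_z)
  then have "coeff (Phi (fa_poly P weyl_z) (monom 1 m)) m = (\<Sum>r\<le>degree P. coeff P r * lam m ^ r)"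
    by (simp add: coeff_sum Phi_smult Phi_pow_z)
  also have "\<dots> = poly P (lam m)" by (simp add: poly_altdef)
  finally show ?thesis using h by blast
qed

lemma star:
  assumes "associated_poly n a P"
  shows "poly P (lam m) = (\<Sum>l\<le>n. a l * (\<i> ^ n * of_nat (fact n * ((m + l) choose n))))"
proof -
  let ?L = "weyl_lhs n a" and ?R = "fa_poly P weyl_z"
  have "(\<lambda>w. ?L w - ?R w) \<in> weyl_ideal"
    using assms by (simp add: associated_poly_def weyl_eq_def)
  moreover have "(\<lambda>w. ?L w - ?R w) = fa_add ?L (fa_smult (-1) ?R)"
    by (rule ext) (simp add: fa_add_def fa_smult_def)
  ultimately have "Phi (fa_add ?L (fa_smult (-1) ?R)) (monom 1 m) = 0"
    using ideal_Phi by metis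
  then have "Phi ?L (monom 1 m) = Phi ?R (monom 1 m)"
    using lhs_fin_Phi[of n a m] rhs_fin_Phi[of P m]
    by (simp add: Phi_add fin_smult Phi_smult)
  then show ?thesis using lhs_fin_Phi[of n a m] rhs_fin_Phi[of P m] by simp
qed

lemma poly_upto:
  fixes P :: "complex poly"
  assumes "degree P \<le> n"
  shows "poly P x = (\<Sum>r=0..n. coeff P r * x ^ r)"
proof -
  have "poly P x = (\<Sum>r\<le>degree P. coeff P r * x ^ r)" by (rule poly_altdef)
  also have "\<dots> = (\<Sum>r\<le>n. coeff P r * x ^ r)"
    by (rule sum.mono_neutral_left) (use assms in \<open>auto simp: coeff_eq_0\<close>)
  finally show ?thesis by (simp add: atLeast0AtMost)
qed

theorem theorem3p1:
  fixes n :: nat and a :: "nat \<Rightarrow> complex" and P :: "complex poly" and k :: nat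
  assumes "associated_poly n a P"
    and "k \<le> n"
  shows "a k = (1 / (\<i> ^ n * of_nat (fact n))) *
           (\<Sum>j=0..n-k. (-1) ^ (n - k - j) * of_nat ((n + 1) choose (n - k - j))
              * poly P (\<i> * (of_nat j + 1/2)))
    \<and> a k = (1 / (\<i> ^ n * of_nat (fact n))) *
           (\<Sum>j=0..n-k. (-1) ^ (n - k - j) * of_nat ((n + 1) choose (n - k - j))
              * (\<Sum>r=0..n. coeff P r * \<i> ^ r * (of_nat j + 1/2) ^ r))"
proof -
  have deg: "degree P \<le> n" using assms(1) by (simp add: associated_poly_def)
  let ?c = "\<lambda>j. (-1) ^ (n - k - j) * (of_nat ((n + 1) choose (n - k - j)) :: complex)"
  let ?K = "\<i> ^ n * (of_nat (fact n) :: complex)"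
  have pv: "poly P (\<i> * (of_nat j + 1/2)) = ?K * (\<Sum>l\<le>n. a l * of_nat ((j + l) choose n))" for j
  proof -
    have "poly P (\<i> * (of_nat j + 1/2)) = (\<Sum>l\<le>n. a l * (\<i> ^ n * of_nat (fact n * ((j + l) choose n))))"
      using star[OF assms(1), of j] by (simp add: lam_def)
    also have "\<dots> = ?K * (\<Sum>l\<le>n. a l * of_nat ((j + l) choose n))"
      by (simp add: sum_distrib_left mult_ac)
    finally show ?thesis .
  qed
  have S: "(\<Sum>j=0..n-k. ?c j * poly P (\<i> * (of_nat j + 1/2))) = ?K * a k"
  proof -
    have "(\<Sum>j=0..n-k. ?c j * poly P (\<i> * (of_nat j + 1/2)))
       = (\<Sum>j=0..n-k. ?c j * (?K * (\<Sum>l\<le>n. a l * of_nat ((j + l) choose n))))"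
      by (simp add: pv)
    also have "\<dots> = (\<Sum>j=0..n-k. \<Sum>l\<le>n. ?K * (a l * (?c j * of_nat ((j + l) choose n))))"
      by (simp add: sum_distrib_left mult_ac)
    also have "\<dots> = (\<Sum>l\<le>n. \<Sum>j=0..n-k. ?K * (a l * (?c j * of_nat ((j + l) choose n))))"
      by (rule sum.swap)
    also have "\<dots> = ?K * (\<Sum>l\<le>n. a l * (\<Sum>j=0..n-k. ?c j * of_nat ((j + l) choose n)))"
      by (simp add: sum_distrib_left)
    also have "\<dots> = ?K * (\<Sum>l\<le>n. a l * (if l = k then 1 else 0))"
      using inner_id[OF assms(2)] by (simp add: mult.assoc)
    also have "\<dots> = ?K * a k" using assms(2) by (simp add: if_distrib cong: if_cong)
    finally show ?thesis .
  qed
  have K0: "?K \<noteq> 0" by simp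
  have C1: "a k = (1 / ?K) * (\<Sum>j=0..n-k. ?c j * poly P (\<i> * (of_nat j + 1/2)))"
    using S K0 by simp
  have pu: "poly P (\<i> * (of_nat j + 1/2)) = (\<Sum>r=0..n. coeff P r * \<i> ^ r * (of_nat j + 1/2) ^ r)" for j :: nat
    by (simp add: poly_upto[OF deg] power_mult_distrib mult.assoc)
  show ?thesis
    using C1 by (simp add: pu mult.assoc)
qed

end
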